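(* Let $N\ge 1$, $\alpha>0$ and $u_0\in L^1(\mathbb{R}^N)\cap L^2(\mathbb{R}^N)$, and let $u$ be the solution of $$\frac{\partial u}{\partial t}+(-\Delta)^\alpha u=0 \text{ on } (0,\infty)\times\mathbb{R}^N,\qquad u(0,x)=u_0(x) \text{ on } \mathbb{R}^N,$$ i.e. $$u(t,x)=(2\pi)^{-N/2}\int_{\mathbb{R}^N}e^{-t|\omega|^{2\alpha}}\widehat{u}_0(\omega)e^{i\omega\cdot x}\,d\omega .$$ For $t>0$ define $$c_t:=\frac{(2\pi)^N}{M_\alpha}t^{N/2\alpha},\qquad M_\alpha:=\int_{\mathbb{R}^N}e^{-|s|^{2\alpha}}\,ds.$$ Then for every compact set $K\subseteq\mathbb{R}^N$, $$\lim_{t\to\infty}c_t\,u(t,x)=\int_{\mathbb{R}^N}u_0(y)\,dy$$ uniformly with respect to $x\in K$.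
   Context: The Fourier transform is $\widehat{u}_0(\omega)=(2\pi)^{-N/2}\int_{\mathbb{R}^N}u_0(x)e^{-i\omega\cdot x}\,dx$, and $(-\Delta)^\alpha$ is the operator with Fourier symbol $|\omega|^{2\alpha}$. *)

theory Defs
  imports "HOL-Analysis.Analysis"
begin

text \<open>Dimension N = DIM('a) for an arbitrary Euclidean space 'a (isometric to R^N).
  Fourier transform with the normalisation (2 pi)^(-N/2), integrals w.r.t. Lebesgue measure.\<close>

definition fourier_transform :: "('a::euclidean_space \<Rightarrow> complex) \<Rightarrow> 'a \<Rightarrow> complex" where
  "fourier_transform f \<omega> =
     complex_of_real ((2 * pi) powr (- real DIM('a) / 2)) *
     (\<integral>x. f x * cis (- (\<omega> \<bullet> x)) \<partial>lborel)"

definition frac_heat_sol :: "real \<Rightarrow> ('a::euclidean_space \<Rightarrow> real) \<Rightarrow> real \<Rightarrow> 'a \<Rightarrow> complex" where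
  "frac_heat_sol \<alpha> u0 t x =
     complex_of_real ((2 * pi) powr (- real DIM('a) / 2)) *
     (\<integral>\<omega>. complex_of_real (exp (- t * norm \<omega> powr (2 * \<alpha>)))
            * fourier_transform (\<lambda>y. complex_of_real (u0 y)) \<omega> * cis (\<omega> \<bullet> x) \<partial>lborel)"

definition M_alpha :: "'a::euclidean_space itself \<Rightarrow> real \<Rightarrow> real" where
  "M_alpha _ \<alpha> = (\<integral>s. exp (- (norm (s::'a) powr (2 * \<alpha>))) \<partial>lborel)"

end

theory Submission
  imports Defs "HOL-Probability.Sinc_Integral"
begin


lemma norm_cis_minus_one_le: "norm (cis \<theta> - 1) \<le> \<bar>\<theta>\<bar>"
proof -
  have "(norm (cis \<theta> - 1))\<^sup>2 = (cos \<theta> - 1)\<^sup>2 + (sin \<theta>)\<^sup>2"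
    by (simp add: cmod_def cis.code)
  also have "\<dots> = 2 - 2 * cos \<theta>"
    using sin_cos_squared_add[of \<theta>] by (simp add: power2_eq_square algebra_simps)
  also have "\<dots> = 4 * (sin (\<theta>/2))\<^sup>2"
    using cos_double_sin[of "\<theta>/2"] by simp
  also have "\<dots> \<le> 4 * (\<theta>/2)\<^sup>2"
  proof -
    have "\<bar>sin (\<theta>/2)\<bar>\<^sup>2 \<le> \<bar>\<theta>/2\<bar>\<^sup>2"
      by (rule power_mono[OF abs_sin_x_le_abs_x]) simp
    then have "(sin (\<theta>/2))\<^sup>2 \<le> (\<theta>/2)\<^sup>2" by (simp only: power2_abs)
    then show ?thesis by simp
  qed
  also have "\<dots> = \<bar>\<theta>\<bar>\<^sup>2" by (simp add: power2_eq_square)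
  finally show ?thesis
    by (meson abs_ge_zero power2_le_imp_le)
qed

lemma norm_cis_minus_one_le2: "norm (cis \<theta> - 1) \<le> 2"
  using norm_triangle_ineq4[of "cis \<theta>" 1] by simp

lemma nn_integral_lborel_scale:
  fixes f :: "'a::euclidean_space \<Rightarrow> ennreal"
  assumes [measurable]: "f \<in> borel_measurable borel" and c: "c \<noteq> 0"
  shows "(\<integral>\<^sup>+x. f x \<partial>lborel) = ennreal (\<bar>c\<bar>^DIM('a)) * (\<integral>\<^sup>+x. f (c *\<^sub>R x) \<partial>lborel)"
  by (subst lborel_affine[OF c, of 0])
     (simp add: nn_integral_density nn_integral_distr nn_integral_cmult)

lemma lborel_integrable_scale:
  fixes f :: "'a::euclidean_space \<Rightarrow> 'b :: {banach, second_countable_topology}"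
  assumes f: "integrable lborel f"
  shows "c \<noteq> 0 \<Longrightarrow> integrable lborel (\<lambda>x. f (c *\<^sub>R x))"
  using f f[THEN borel_measurable_integrable] unfolding integrable_iff_bounded
  by (subst (asm) nn_integral_lborel_scale[where c=c]) (auto simp: ennreal_mult_less_top)

lemma lborel_integrable_scale_iff:
  fixes f :: "'a::euclidean_space \<Rightarrow> 'b :: {banach, second_countable_topology}"
  shows "c \<noteq> 0 \<Longrightarrow> integrable lborel (\<lambda>x. f (c *\<^sub>R x)) \<longleftrightarrow> integrable lborel f"
  using
    lborel_integrable_scale[of f c]
    lborel_integrable_scale[of "\<lambda>x. f (c *\<^sub>R x)" "1/c"]
  by auto

lemma lborel_integral_scale:
  fixes f :: "'a::euclidean_space \<Rightarrow> 'b :: {banach, second_countable_topology}" and c :: real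
  assumes c: "c \<noteq> 0" shows "(\<integral>x. f x \<partial> lborel) = \<bar>c\<bar>^DIM('a) *\<^sub>R (\<integral>x. f (c *\<^sub>R x) \<partial>lborel)"
proof cases
  assume f[measurable]: "integrable lborel f" then show ?thesis
    using c f f[THEN borel_measurable_integrable] f[THEN lborel_integrable_scale, of c]
    by (subst lborel_affine[OF c, of 0])
       (simp add: integral_density integral_distr)
next
  assume "\<not> integrable lborel f" with c show ?thesis
    by (simp add: lborel_integrable_scale_iff not_integrable_integral_eq)
qed

lemma integrable_inv_sq: "integrable lborel (\<lambda>x::real. inverse (1 + x^2))"
  using integrable_inverse_1_plus_square by (simp add: einterval_eq_UNIV set_integrable_def)

lemma integrable_prod_inv_sq:
  "integrable lborel (\<lambda>x::'a::euclidean_space. \<Prod>b\<in>Basis. inverse (1 + (x \<bullet> b)^2))"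
proof (rule integrableI_nonneg)
  show "(\<lambda>x::'a. \<Prod>b\<in>Basis. inverse (1 + (x \<bullet> b)^2)) \<in> borel_measurable lborel" by measurable
  show "AE x in lborel. 0 \<le> (\<Prod>b\<in>(Basis::'a set). inverse (1 + (x \<bullet> b)^2))"
    by (auto intro!: prod_nonneg)
  have fin: "(\<integral>\<^sup>+x. ennreal (inverse (1 + x^2)) \<partial>lborel) < \<infinity>"
    using integrable_inv_sq unfolding integrable_iff_bounded by simp
  have "(\<integral>\<^sup>+x. ennreal (\<Prod>b\<in>(Basis::'a set). inverse (1 + (x \<bullet> b)^2)) \<partial>lborel)
      = (\<integral>\<^sup>+x. (\<Prod>b\<in>(Basis::'a set). (\<lambda>b y. ennreal (inverse (1 + y^2))) b (x \<bullet> b)) \<partial>lborel)"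
    by (intro nn_integral_cong) (simp add: prod_ennreal)
  also have "\<dots> = (\<Prod>b\<in>(Basis::'a set). (\<integral>\<^sup>+y. ennreal (inverse (1 + y^2)) \<partial>lborel))"
    by (rule nn_integral_lborel_prod) auto
  also have "\<dots> < \<infinity>" using fin by (simp add: prod_constant power_less_top_ennreal top.not_eq_extremum)
  finally show "(\<integral>\<^sup>+x. ennreal (\<Prod>b\<in>(Basis::'a set). inverse (1 + (x \<bullet> b)^2)) \<partial>lborel) < \<infinity>" .
qed



lemma exp_ge_powr:
  fixes y p :: real assumes "y \<ge> 0" "p > 0"
  shows "(y/p) powr p \<le> exp y"
proof -
  have "y/p \<le> exp (y/p)" using exp_ge_add_one_self[of "y/p"] by linarith
  then have "(y/p) powr p \<le> exp (y/p) powr p"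
    using assms by (intro powr_mono2) auto
  also have "exp (y/p) powr p = exp y"
    using assms by (simp add: powr_def)
  finally show ?thesis .
qed

lemma poly_exp_bound:
  fixes r \<alpha> :: real and N :: nat
  assumes "r \<ge> 0" "\<alpha> > 0" "N \<ge> 1"
  shows "(1 + r^2)^N \<le> 2^N * (1 + (N/\<alpha>) powr (N/\<alpha>)) * exp (r powr (2*\<alpha>))"
proof -
  define p where "p = N/\<alpha>"
  have p: "p > 0" using assms by (simp add: p_def)
  define y where "y = r powr (2*\<alpha>)"
  have y: "y \<ge> 0" by (simp add: y_def)
  have key: "r^(2*N) \<le> p powr p * exp y"
  proof (cases "r = 0")
    case True then show ?thesis using assms p by (simp add: power_0_left)
  next
    case False
    then have r: "r > 0" using assms by simp
    have "(y/p) powr p = y powr p / p powr p"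
      using p y by (simp add: powr_divide)
    also have "y powr p = r powr (2*\<alpha>*p)"
      using r by (simp add: y_def powr_powr)
    also have "2*\<alpha>*p = real (2*N)" using assms by (simp add: p_def)
    also have "r powr real (2*N) = r^(2*N)" by (rule powr_realpow[OF r])
    finally have "r^(2*N) = p powr p * (y/p) powr p" using p by (simp add: field_simps)
    also have "\<dots> \<le> p powr p * exp y"
      using exp_ge_powr[OF y p] by (intro mult_left_mono) auto
    finally show ?thesis .
  qed
  have "1 + r^2 \<le> 2 * max 1 (r^2)" by simp
  then have "(1 + r^2)^N \<le> (2 * max 1 (r^2))^N"
    by (intro power_mono) (auto simp: add_nonneg_nonneg)
  also have "\<dots> = 2^N * max 1 (r^2)^N" by (simp add: power_mult_distrib)
  also have "max 1 (r^2)^N \<le> 1 + r^(2*N)"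
    by (cases "1 \<le> r^2") (auto simp: max_def power_mult intro: one_le_power)
  also have "1 + r^(2*N) \<le> exp y + p powr p * exp y"
    using key y by (intro add_mono) auto
  also have "exp y + p powr p * exp y = (1 + p powr p) * exp y" by (simp add: algebra_simps)
  finally show ?thesis
    by (simp add: p_def y_def mult.assoc)
qed

lemma exp_decay_bound:
  fixes s :: "'a::euclidean_space" and \<alpha> :: real
  assumes "\<alpha> > 0"
  shows "exp (- (norm s powr (2*\<alpha>))) \<le>
     2^DIM('a) * (1 + (DIM('a)/\<alpha>) powr (DIM('a)/\<alpha>)) * (\<Prod>b\<in>Basis. inverse (1 + (s \<bullet> b)^2))"
proof -
  define C where "C = 2^DIM('a) * (1 + (DIM('a)/\<alpha>) powr (DIM('a)/\<alpha>))"
  have C: "C > 0" by (simp add: C_def add_pos_nonneg)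
  have "(\<Prod>b\<in>(Basis::'a set). 1 + (s \<bullet> b)^2) \<le> (\<Prod>b\<in>(Basis::'a set). 1 + (norm s)^2)"
  proof (intro prod_mono conjI)
    fix b :: 'a assume "b \<in> Basis"
    then have "\<bar>s \<bullet> b\<bar> \<le> norm s" by (rule Basis_le_norm)
    then have "(s \<bullet> b)^2 \<le> (norm s)^2"
      by (metis abs_ge_zero power2_abs power_mono)
    then show "1 + (s \<bullet> b)^2 \<le> 1 + (norm s)^2" by simp
  qed (auto simp: add_nonneg_nonneg)
  also have "\<dots> = (1 + (norm s)^2)^DIM('a)" by simp
  also have "\<dots> \<le> C * exp (norm s powr (2*\<alpha>))"
    unfolding C_def by (rule poly_exp_bound) (use assms in auto)
  finally have P: "(\<Prod>b\<in>(Basis::'a set). 1 + (s \<bullet> b)^2) \<le> C * exp (norm s powr (2*\<alpha>))" .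
  have Ppos: "(\<Prod>b\<in>(Basis::'a set). 1 + (s \<bullet> b)^2) > 0"
    by (intro prod_pos) (auto simp: add_pos_nonneg)
  have "exp (- (norm s powr (2*\<alpha>))) = inverse (exp (norm s powr (2*\<alpha>)))"
    by (simp add: exp_minus)
  also have "\<dots> \<le> C * inverse (\<Prod>b\<in>(Basis::'a set). 1 + (s \<bullet> b)^2)"
    using P Ppos C by (simp add: field_simps)
  also have "\<dots> = C * (\<Prod>b\<in>Basis. inverse (1 + (s \<bullet> b)^2))"
    by (simp add: prod_inversef[symmetric])
  finally show ?thesis by (simp add: C_def)
qed

lemma integrable_exp_decay:
  assumes "\<alpha> > 0"
  shows "integrable lborel (\<lambda>s::'a::euclidean_space. exp (- (norm s powr (2*\<alpha>))))"
proof (rule Bochner_Integration.integrable_bound)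
  show "integrable lborel (\<lambda>s::'a. 2^DIM('a) * (1 + (DIM('a)/\<alpha>) powr (DIM('a)/\<alpha>)) *
          (\<Prod>b\<in>Basis. inverse (1 + (s \<bullet> b)^2)))"
    by (intro integrable_mult_right integrable_prod_inv_sq)
  show "(\<lambda>s::'a. exp (- (norm s powr (2*\<alpha>)))) \<in> borel_measurable lborel" by measurable
  show "AE s in lborel. norm (exp (- (norm (s::'a) powr (2*\<alpha>)))) \<le>
     norm (2^DIM('a) * (1 + (DIM('a)/\<alpha>) powr (DIM('a)/\<alpha>)) * (\<Prod>b\<in>Basis. inverse (1 + (s \<bullet> b)^2)))"
  proof (intro AE_I2)
    fix s :: 'a
    have "0 \<le> (\<Prod>b\<in>(Basis::'a set). inverse (1 + (s \<bullet> b)^2))"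
      by (intro prod_nonneg) (auto simp: add_nonneg_nonneg)
    then show "norm (exp (- (norm (s::'a) powr (2*\<alpha>)))) \<le>
     norm (2^DIM('a) * (1 + (DIM('a)/\<alpha>) powr (DIM('a)/\<alpha>)) * (\<Prod>b\<in>Basis. inverse (1 + (s \<bullet> b)^2)))"
      using exp_decay_bound[OF assms, of s] by (simp add: abs_mult add_nonneg_nonneg)
  qed
qed

lemma M_pos:
  assumes "\<alpha> > 0"
  shows "(\<integral>s. exp (- (norm (s::'a::euclidean_space) powr (2*\<alpha>))) \<partial>lborel) > 0"
proof -
  have ne: "(\<integral>s. exp (- (norm (s::'a) powr (2*\<alpha>))) \<partial>lborel) \<noteq> 0"
  proof
    assume "(\<integral>s. exp (- (norm (s::'a) powr (2*\<alpha>))) \<partial>lborel) = 0"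
    then have "AE s in lborel. exp (- (norm (s::'a) powr (2*\<alpha>))) = 0"
    proof -
      have "AE x in lborel. 0 \<le> exp (- (norm (x::'a) powr (2*\<alpha>)))" by simp
      from integral_nonneg_eq_0_iff_AE[OF integrable_exp_decay[OF assms] this]
      show ?thesis using \<open>(\<integral>s. exp (- (norm (s::'a) powr (2*\<alpha>))) \<partial>lborel) = 0\<close> by blast
    qed
    then have "AE s in (lborel::'a measure). False" by simp
    then show False
    proof (rule AE_E)
      fix Z assume "{s \<in> space (lborel::'a measure). \<not> False} \<subseteq> Z" "emeasure lborel Z = 0"
      then show False by (simp add: top.extremum_unique)
    qed
  qed
  have "(\<integral>s. exp (- (norm (s::'a) powr (2*\<alpha>))) \<partial>lborel) \<ge> 0"
    by (intro integral_nonneg_AE) auto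
  with ne show ?thesis by linarith
qed



lemma borel_measurable_cis [measurable]:
  assumes [measurable]: "f \<in> borel_measurable M"
  shows "(\<lambda>x. cis (f x)) \<in> borel_measurable M"
proof -
  have "cis \<in> borel_measurable borel"
    by (intro borel_measurable_continuous_onI continuous_on_cis continuous_on_id)
  then show ?thesis using measurable_compose[OF assms] by blast
qed

context
  fixes u0 :: "'a::euclidean_space \<Rightarrow> real"
  assumes u0: "integrable lborel u0"
begin

lemma ft_integrable: "integrable lborel (\<lambda>y. complex_of_real (u0 y) * cis (- (\<omega> \<bullet> y)))"
proof (rule Bochner_Integration.integrable_bound[OF u0])
  have [measurable]: "u0 \<in> borel_measurable borel" using u0 by auto
  show "(\<lambda>y. complex_of_real (u0 y) * cis (- (\<omega> \<bullet> y))) \<in> borel_measurable lborel" by measurable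
  show "AE y in lborel. norm (complex_of_real (u0 y) * cis (- (\<omega> \<bullet> y))) \<le> norm (u0 y)"
    by (simp add: norm_mult)
qed

lemma ft_bound:
  "norm (fourier_transform (\<lambda>y. complex_of_real (u0 y)) \<omega>)
     \<le> (2 * pi) powr (- real DIM('a) / 2) * (\<integral>y. norm (u0 y) \<partial>lborel)"
proof -
  have "norm (\<integral>y. complex_of_real (u0 y) * cis (- (\<omega> \<bullet> y)) \<partial>lborel)
      \<le> (\<integral>y. norm (complex_of_real (u0 y) * cis (- (\<omega> \<bullet> y))) \<partial>lborel)"
    by (rule integral_norm_bound)
  also have "\<dots> = (\<integral>y. norm (u0 y) \<partial>lborel)" by (simp add: norm_mult)
  finally show ?thesis
    unfolding fourier_transform_def by (simp add: norm_mult mult_left_mono)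
qed

lemma ft_zero:
  "fourier_transform (\<lambda>y. complex_of_real (u0 y)) 0
     = complex_of_real ((2 * pi) powr (- real DIM('a) / 2) * (\<integral>y. u0 y \<partial>lborel))"
  unfolding fourier_transform_def by (simp add: integral_complex_of_real)

lemma ft_isCont: "isCont (fourier_transform (\<lambda>y. complex_of_real (u0 y))) \<omega>"
proof (rule continuous_at_sequentiallyI)
  fix w :: "nat \<Rightarrow> 'a" assume w: "w \<longlonglongrightarrow> \<omega>"
  have [measurable]: "u0 \<in> borel_measurable borel" using u0 by auto
  have "(\<lambda>n. \<integral>y. complex_of_real (u0 y) * cis (- (w n \<bullet> y)) \<partial>lborel)
        \<longlonglongrightarrow> (\<integral>y. complex_of_real (u0 y) * cis (- (\<omega> \<bullet> y)) \<partial>lborel)"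
  proof (rule integral_dominated_convergence[where w="\<lambda>y. norm (u0 y)"])
    show "(\<lambda>y. complex_of_real (u0 y) * cis (- (\<omega> \<bullet> y))) \<in> borel_measurable lborel" by measurable
    show "(\<lambda>y. complex_of_real (u0 y) * cis (- (w n \<bullet> y))) \<in> borel_measurable lborel" for n by measurable
    show "integrable lborel (\<lambda>y. norm (u0 y))" using u0 by auto
    show "AE y in lborel. (\<lambda>n. complex_of_real (u0 y) * cis (- (w n \<bullet> y)))
            \<longlonglongrightarrow> complex_of_real (u0 y) * cis (- (\<omega> \<bullet> y))"
      by (intro AE_I2 tendsto_intros w continuous_on_tendsto_compose[OF continuous_on_cis _ ])
    show "AE y in lborel. norm (complex_of_real (u0 y) * cis (- (w n \<bullet> y))) \<le> norm (u0 y)" for n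
      by (simp add: norm_mult)
  qed
  then show "(\<lambda>n. fourier_transform (\<lambda>y. complex_of_real (u0 y)) (w n))
        \<longlonglongrightarrow> fourier_transform (\<lambda>y. complex_of_real (u0 y)) \<omega>"
    unfolding fourier_transform_def by (intro tendsto_mult tendsto_const)
qed

lemma ft_measurable: "fourier_transform (\<lambda>y. complex_of_real (u0 y)) \<in> borel_measurable borel"
  by (intro borel_measurable_continuous_onI continuous_at_imp_continuous_on ballI ft_isCont)

end


lemma aux_cis_bound:
  fixes Fa F0 :: complex
  assumes "norm Fa \<le> L" "norm F0 \<le> L" "\<bar>\<theta>\<bar> \<le> r"
  shows "norm (Fa * cis \<theta> - F0) \<le> norm (Fa - F0) + L * min 2 r"
proof -
  have "Fa * cis \<theta> - F0 = (Fa - F0) * cis \<theta> + F0 * (cis \<theta> - 1)" by (simp add: algebra_simps)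
  then have "norm (Fa * cis \<theta> - F0) \<le> norm ((Fa - F0) * cis \<theta>) + norm (F0 * (cis \<theta> - 1))"
    by (metis norm_triangle_ineq)
  also have "norm ((Fa - F0) * cis \<theta>) = norm (Fa - F0)" by (simp add: norm_mult)
  also have "norm (F0 * (cis \<theta> - 1)) = norm F0 * norm (cis \<theta> - 1)" by (simp add: norm_mult)
  also have "norm (cis \<theta> - 1) \<le> min 2 r"
    using norm_cis_minus_one_le[of \<theta>] norm_cis_minus_one_le2[of \<theta>] assms(3) by simp
  then have "norm F0 * norm (cis \<theta> - 1) \<le> L * min 2 r"
  proof -
    have "0 \<le> L" using assms(2) norm_ge_zero[of F0] by linarith
    then show ?thesis using assms(2) \<open>norm (cis \<theta> - 1) \<le> min 2 r\<close> by (intro mult_mono) auto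
  qed
  finally show ?thesis by simp
qed

lemma aux_norm_scale:
  fixes a b :: complex assumes "r > 0"
  shows "norm (complex_of_real r * a - complex_of_real r * b) = r * norm (a - b)"
proof -
  have "complex_of_real r * a - complex_of_real r * b = complex_of_real r * (a - b)"
    by (simp add: right_diff_distrib)
  then show ?thesis using assms by (simp only: norm_mult norm_of_real abs_of_pos)
qed

theorem theorem1p1:
  fixes u0 :: "'a::euclidean_space \<Rightarrow> real" and \<alpha> :: real and K :: "'a set"
  assumes "\<alpha> > 0"
    and "integrable lborel u0"
    and "integrable lborel (\<lambda>x. (u0 x)\<^sup>2)"
    and "compact K"
  shows "uniform_limit K
           (\<lambda>t x. complex_of_real ((2 * pi) ^ DIM('a) / M_alpha TYPE('a) \<alpha>
                      * t powr (real DIM('a) / (2 * \<alpha>))) * frac_heat_sol \<alpha> u0 t x)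
           (\<lambda>x. complex_of_real (\<integral>y. u0 y \<partial>lborel))
           at_top"
proof -
  note u0 = assms(2)
  have [measurable]: "u0 \<in> borel_measurable borel" using u0 by auto
  define B where "B = (2*pi) powr (- real DIM('a) / 2)"
  define F where "F = fourier_transform (\<lambda>y. complex_of_real (u0 y))"
  define A where "A = (\<integral>y. u0 y \<partial>lborel)"
  define L where "L = B * (\<integral>y. norm (u0 y) \<partial>lborel)"
  define e where "e = (\<lambda>s::'a. exp (- (norm s powr (2*\<alpha>))))"
  define M where "M = M_alpha TYPE('a) \<alpha>"
  define P where "P = (2*pi)^DIM('a) * B"
  define lam where "lam = (\<lambda>t::real. t powr (-1/(2*\<alpha>)))"
  have Mdef: "M = (\<integral>s. e s \<partial>lborel)" unfolding M_def M_alpha_def e_def by simp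
  have Mpos: "M > 0" using M_pos[OF assms(1)] unfolding Mdef e_def by simp
  have e_int: "integrable lborel e" unfolding e_def by (rule integrable_exp_decay[OF assms(1)])
  have e_pos: "e s > 0" for s unfolding e_def by simp
  have e_meas[measurable]: "e \<in> borel_measurable borel" unfolding e_def by measurable
  have Bpos: "B > 0" unfolding B_def by simp
  have PB: "P * B = 1"
  proof -
    have "P * B = (2*pi) powr real DIM('a) * (B * B)"
      unfolding P_def by (simp add: powr_realpow)
    also have "B * B = (2*pi) powr (- real DIM('a))"
      unfolding B_def by (simp add: powr_add[symmetric])
    also have "(2*pi) powr real DIM('a) * (2*pi) powr (- real DIM('a)) = 1"
      by (simp add: powr_add[symmetric])
    finally show ?thesis .
  qed
  have L0: "L \<ge> 0" unfolding L_def using Bpos by (simp add: integral_nonneg_AE)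
  have Fbound: "norm (F \<omega>) \<le> L" for \<omega>
    unfolding F_def L_def B_def by (rule ft_bound[OF u0])
  have F0: "F 0 = complex_of_real (B * A)"
    unfolding F_def B_def A_def by (rule ft_zero[OF u0])
  have Fcont: "isCont F \<omega>" for \<omega> unfolding F_def by (rule ft_isCont[OF u0])
  have Fmeas[measurable]: "F \<in> borel_measurable borel" unfolding F_def by (rule ft_measurable[OF u0])
  obtain R where R: "R > 0" "\<And>x. x \<in> K \<Longrightarrow> norm x \<le> R"
    using compact_imp_bounded[OF assms(4)] bounded_pos by blast
  have lam_pos: "lam t > 0" if "t > 0" for t unfolding lam_def using that by simp
  have lam_lim: "(lam \<longlongrightarrow> 0) at_top"
    unfolding lam_def by (rule tendsto_neg_powr) (use assms(1) in \<open>auto simp: filterlim_ident\<close>)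

  define I where "I = (\<lambda>t x. (\<integral>s. complex_of_real (e s) * F (lam t *\<^sub>R s) * cis ((lam t *\<^sub>R s) \<bullet> x) \<partial>lborel))"
  have rewrite: "complex_of_real ((2 * pi) ^ DIM('a) / M_alpha TYPE('a) \<alpha>
                      * t powr (real DIM('a) / (2 * \<alpha>))) * frac_heat_sol \<alpha> u0 t x
     = complex_of_real (P / M) * I t x" if t: "t > 0" for t x
  proof -
    have l: "lam t > 0" using lam_pos[OF t] .
    have h: "complex_of_real (exp (- t * norm (lam t *\<^sub>R s) powr (2 * \<alpha>))) = complex_of_real (e s)" for s
    proof -
      have "norm (lam t *\<^sub>R s) powr (2*\<alpha>) = (lam t) powr (2*\<alpha>) * norm s powr (2*\<alpha>)"
        using l by (simp add: powr_mult)
      also have "(lam t) powr (2*\<alpha>) = inverse t"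
      proof -
        have "(t powr (-1/(2*\<alpha>))) powr (2*\<alpha>) = t powr ((-1/(2*\<alpha>))*(2*\<alpha>))" by (rule powr_powr)
        also have "(-1/(2*\<alpha>))*(2*\<alpha>) = -1" using assms(1) by simp
        also have "t powr -1 = inverse t" using t by (simp add: powr_minus)
        finally show ?thesis unfolding lam_def .
      qed
      finally show ?thesis using t by (simp add: e_def)
    qed
    have "(\<integral>\<omega>. complex_of_real (exp (- t * norm \<omega> powr (2 * \<alpha>))) * F \<omega> * cis (\<omega> \<bullet> x) \<partial>lborel)
       = \<bar>lam t\<bar>^DIM('a) *\<^sub>R (\<integral>s. complex_of_real (exp (- t * norm (lam t *\<^sub>R s) powr (2 * \<alpha>)))
              * F (lam t *\<^sub>R s) * cis ((lam t *\<^sub>R s) \<bullet> x) \<partial>lborel)"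
      by (rule lborel_integral_scale) (use l in simp)
    also have "\<dots> = (lam t)^DIM('a) *\<^sub>R I t x" unfolding I_def h abs_of_pos[OF l] ..
    finally have fh: "frac_heat_sol \<alpha> u0 t x = complex_of_real (B * (lam t)^DIM('a)) * I t x"
      unfolding frac_heat_sol_def B_def F_def by (simp add: scaleR_conv_of_real)
    have lN: "(lam t)^DIM('a) = t powr (- real DIM('a) / (2*\<alpha>))"
      unfolding lam_def using t by (simp add: powr_realpow[symmetric] powr_powr)
    have "t powr (real DIM('a) / (2 * \<alpha>)) * (lam t)^DIM('a) = 1"
      unfolding lN using t by (simp add: powr_add[symmetric])
    then have "(2 * pi) ^ DIM('a) / M_alpha TYPE('a) \<alpha> * t powr (real DIM('a) / (2 * \<alpha>)) * (B * (lam t)^DIM('a)) = P / M"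
      unfolding P_def M_def by (simp add: field_simps)
    then show ?thesis unfolding fh mult.assoc[symmetric] of_real_mult[symmetric] by simp
  qed

  have target: "complex_of_real A = complex_of_real (P / M) * (\<integral>s. complex_of_real (e s) * F 0 \<partial>lborel)"
  proof -
    have eqI: "(\<integral>s. complex_of_real (e s) * F 0 \<partial>lborel) = complex_of_real M * F 0"
      unfolding Mdef by (simp add: integral_complex_of_real)
    have "complex_of_real (P / M) * (\<integral>s. complex_of_real (e s) * F 0 \<partial>lborel)
        = complex_of_real (P / M) * (complex_of_real M * F 0)" unfolding eqI by (rule refl)
    also have "\<dots> = complex_of_real ((P / M) * M * B * A)" unfolding F0 by (simp only: of_real_mult mult_ac)
    also have "(P / M) * M * B * A = A" using Mpos PB by simp
    finally show ?thesis by simp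
  qed
  define G where "G = (\<lambda>t (s::'a). e s * (norm (F (lam t *\<^sub>R s) - F 0) + L * min 2 (lam t * norm s * R)))"
  define J where "J = (\<lambda>t. \<integral>s. G t s \<partial>lborel)"
  have G_nonneg: "G t s \<ge> 0" if "t > 0" for t s
    unfolding G_def using e_pos[of s] L0 R lam_pos[OF that] by (intro mult_nonneg_nonneg add_nonneg_nonneg) auto
  have G_bound: "norm (G t s) \<le> e s * (4 * L)" if "t > 0" for t s
  proof -
    have "norm (F (lam t *\<^sub>R s) - F 0) \<le> norm (F (lam t *\<^sub>R s)) + norm (F 0)" by (rule norm_triangle_ineq4)
    also have "\<dots> \<le> 2 * L" using Fbound[of "lam t *\<^sub>R s"] Fbound[of 0] by simp
    finally have 1: "norm (F (lam t *\<^sub>R s) - F 0) \<le> 2 * L" .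
    have 2: "L * min 2 (lam t * norm s * R) \<le> L * 2" using L0 by (intro mult_left_mono) auto
    have "G t s \<le> e s * (4 * L)"
      unfolding G_def using 1 2 e_pos[of s] by (intro mult_left_mono) auto
    then show ?thesis using G_nonneg[OF that, of s] by simp
  qed
  have G_meas[measurable]: "G t \<in> borel_measurable lborel" for t unfolding G_def by measurable
  have bound_int: "integrable lborel (\<lambda>s. e s * (4 * L))" by (intro integrable_mult_left e_int)
  have G_int: "integrable lborel (G t)" if "t > 0" for t
    by (rule Bochner_Integration.integrable_bound[OF bound_int G_meas])
       (use G_bound[OF that] L0 e_pos in \<open>auto intro!: AE_I2 simp: abs_mult abs_of_pos\<close>)
  have J_lim: "(J \<longlongrightarrow> 0) at_top"
  proof -
    have "((\<lambda>t. integral\<^sup>L lborel (G t)) \<longlongrightarrow> integral\<^sup>L lborel (\<lambda>s::'a. 0::real)) at_top"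
    proof (rule integral_dominated_convergence_at_top[where w="\<lambda>s. e s * (4 * L)"])
      show "(\<lambda>s::'a. 0::real) \<in> borel_measurable lborel" by simp
      show "G t \<in> borel_measurable lborel" for t by (rule G_meas)
      show "integrable lborel (\<lambda>s. e s * (4 * L))" by (rule bound_int)
      show "\<forall>\<^sub>F t in at_top. AE s in lborel. norm (G t s) \<le> e s * (4 * L)"
        using eventually_gt_at_top[of "0::real"] by eventually_elim (use G_bound in \<open>auto intro!: AE_I2\<close>)
      show "AE s in lborel. ((\<lambda>t. G t s) \<longlongrightarrow> 0) at_top"
      proof (intro AE_I2)
        fix s :: 'a
        have "((\<lambda>t. G t s) \<longlongrightarrow> e s * (norm (F (0 *\<^sub>R s) - F 0) + L * min 2 (0 * norm s * R))) at_top"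
          unfolding G_def
          by (intro tendsto_intros isCont_tendsto_compose[OF Fcont] lam_lim)
        then show "((\<lambda>t. G t s) \<longlongrightarrow> 0) at_top" by simp
      qed
    qed
    then show ?thesis unfolding J_def by simp
  qed
  have main: "norm (I t x - (\<integral>s. complex_of_real (e s) * F 0 \<partial>lborel)) \<le> J t"
    if t: "t > 0" and x: "x \<in> K" for t x
  proof -
    have l: "lam t > 0" using lam_pos[OF t] .
    have i1: "integrable lborel (\<lambda>s. complex_of_real (e s) * F (lam t *\<^sub>R s) * cis ((lam t *\<^sub>R s) \<bullet> x))"
    proof (rule Bochner_Integration.integrable_bound[where f="\<lambda>s. e s * L"])
      show "integrable lborel (\<lambda>s. e s * L)" by (intro integrable_mult_left e_int)
      show "(\<lambda>s. complex_of_real (e s) * F (lam t *\<^sub>R s) * cis ((lam t *\<^sub>R s) \<bullet> x)) \<in> borel_measurable lborel"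
        by measurable
      show "AE s in lborel. norm (complex_of_real (e s) * F (lam t *\<^sub>R s) * cis ((lam t *\<^sub>R s) \<bullet> x)) \<le> norm (e s * L)"
        using e_pos L0 Fbound by (intro AE_I2) (auto simp: norm_mult abs_mult intro!: mult_left_mono)
    qed
    have i2: "integrable lborel (\<lambda>s. complex_of_real (e s) * F 0)"
    proof (rule Bochner_Integration.integrable_bound[where f="\<lambda>s. e s * L"])
      show "integrable lborel (\<lambda>s. e s * L)" by (intro integrable_mult_left e_int)
      show "(\<lambda>s. complex_of_real (e s) * F 0) \<in> borel_measurable lborel"
        by measurable
      show "AE s in lborel. norm (complex_of_real (e s) * F 0) \<le> norm (e s * L)"
        using e_pos L0 Fbound by (intro AE_I2) (auto simp: norm_mult abs_mult intro!: mult_left_mono)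
    qed
    have "I t x - (\<integral>s. complex_of_real (e s) * F 0 \<partial>lborel)
       = (\<integral>s. complex_of_real (e s) * F (lam t *\<^sub>R s) * cis ((lam t *\<^sub>R s) \<bullet> x) - complex_of_real (e s) * F 0 \<partial>lborel)"
      unfolding I_def by (rule Bochner_Integration.integral_diff[OF i1 i2, symmetric])
    also have "norm \<dots> \<le> (\<integral>s. norm (complex_of_real (e s) * F (lam t *\<^sub>R s) * cis ((lam t *\<^sub>R s) \<bullet> x) - complex_of_real (e s) * F 0) \<partial>lborel)"
      by (rule integral_norm_bound)
    also have "\<dots> \<le> J t"
      unfolding J_def
    proof (rule integral_mono)
      show "integrable lborel (\<lambda>s. norm (complex_of_real (e s) * F (lam t *\<^sub>R s) * cis ((lam t *\<^sub>R s) \<bullet> x) - complex_of_real (e s) * F 0))"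
        by (intro integrable_norm Bochner_Integration.integrable_diff i1 i2)
      show "integrable lborel (G t)" by (rule G_int[OF t])
      fix s :: 'a
      have th: "\<bar>(lam t *\<^sub>R s) \<bullet> x\<bar> \<le> lam t * norm s * R"
      proof -
        have "\<bar>(lam t *\<^sub>R s) \<bullet> x\<bar> \<le> norm (lam t *\<^sub>R s) * norm x" by (rule Cauchy_Schwarz_ineq2)
        also have "\<dots> \<le> norm (lam t *\<^sub>R s) * R" using R(2)[OF x] by (intro mult_left_mono) auto
        finally show ?thesis using l by simp
      qed
      have "complex_of_real (e s) * F (lam t *\<^sub>R s) * cis ((lam t *\<^sub>R s) \<bullet> x) - complex_of_real (e s) * F 0
          = complex_of_real (e s) * (F (lam t *\<^sub>R s) * cis ((lam t *\<^sub>R s) \<bullet> x) - F 0)"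
        by (simp add: algebra_simps)
      then have "norm (complex_of_real (e s) * F (lam t *\<^sub>R s) * cis ((lam t *\<^sub>R s) \<bullet> x) - complex_of_real (e s) * F 0)
          = e s * norm (F (lam t *\<^sub>R s) * cis ((lam t *\<^sub>R s) \<bullet> x) - F 0)"
        using e_pos[of s] by (simp add: norm_mult)
      also have "\<dots> \<le> e s * (norm (F (lam t *\<^sub>R s) - F 0) + L * min 2 (lam t * norm s * R))"
        using e_pos[of s] by (intro mult_left_mono aux_cis_bound Fbound th) auto
      finally show "norm (complex_of_real (e s) * F (lam t *\<^sub>R s) * cis ((lam t *\<^sub>R s) \<bullet> x) - complex_of_real (e s) * F 0) \<le> G t s"
        unfolding G_def .
    qed
    finally show ?thesis .
  qed
  show ?thesis
  proof (rule uniform_limitI)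
    fix \<epsilon> :: real assume \<epsilon>: "\<epsilon> > 0"
    have PM: "P / M > 0" using Mpos PB Bpos by (simp add: P_def)
    have "\<forall>\<^sub>F t in at_top. J t < \<epsilon> / (P / M)"
      using order_tendstoD(2)[OF J_lim divide_pos_pos[OF \<epsilon> PM]] .
    then show "\<forall>\<^sub>F t in at_top. \<forall>x\<in>K. dist (complex_of_real ((2 * pi) ^ DIM('a) / M_alpha TYPE('a) \<alpha>
                      * t powr (real DIM('a) / (2 * \<alpha>))) * frac_heat_sol \<alpha> u0 t x) (complex_of_real (\<integral>y. u0 y \<partial>lborel)) < \<epsilon>"
      using eventually_gt_at_top[of "0::real"]
    proof eventually_elim
      case (elim t)
      show ?case
      proof
        fix x assume x: "x \<in> K"
        have "dist (complex_of_real ((2 * pi) ^ DIM('a) / M_alpha TYPE('a) \<alpha>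
                      * t powr (real DIM('a) / (2 * \<alpha>))) * frac_heat_sol \<alpha> u0 t x) (complex_of_real (\<integral>y. u0 y \<partial>lborel))
           = norm (complex_of_real (P / M) * I t x - complex_of_real (P / M) * (\<integral>s. complex_of_real (e s) * F 0 \<partial>lborel))"
          unfolding rewrite[OF elim(2)] target[unfolded A_def, symmetric] dist_norm ..
        also have "\<dots> = (P / M) * norm (I t x - (\<integral>s. complex_of_real (e s) * F 0 \<partial>lborel))"
          by (rule aux_norm_scale[OF PM])
        also have "\<dots> \<le> (P / M) * J t" using main[OF elim(2) x] PM by (intro mult_left_mono) auto
        also have "\<dots> < (P / M) * (\<epsilon> / (P / M))" using elim(1) PM by (intro mult_strict_left_mono) auto
        also have "\<dots> = \<epsilon>"
        proof -
          have "P > 0" using PB Bpos by (metis less_numeral_extra(1) zero_less_mult_pos2)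
          then show ?thesis using Mpos by simp
        qed
        finally show "dist (complex_of_real ((2 * pi) ^ DIM('a) / M_alpha TYPE('a) \<alpha>
                      * t powr (real DIM('a) / (2 * \<alpha>))) * frac_heat_sol \<alpha> u0 t x) (complex_of_real (\<integral>y. u0 y \<partial>lborel)) < \<epsilon>" .
      qed
    qed
  qed
qed
end
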